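(* Haechi (described in the context) guarantees sharded system liveness: every transaction received by at least one honest node is eventually handled by the relevant shards and gets a response from the sharded system.
   Context: Setting. A sharded blockchain consists of shards $S_0,S_1,\dots,S_m$ ($S_0$ the beacon shard), each running a BFT state-machine-replication consensus and always satisfying $3f_i+1<|S_i|$ ($f_i$ Byzantine nodes out of $|S_i|$), hence each shard has intra-shard safety and intra-shard liveness (a transaction received by at least one honest node of the shard is eventually handled and answered by the shard); messages between honest parties are not dropped. OTXs are transactions calling order-sensitive contracts. Non-OTX transactions are handled by the underlying intra-shard consensus (intra-shard transactions) or by a two-phase cross-shard protocol (cross-shard transactions), which are assumed to provide responses. Haechi for OTXs: the sender shard processes an OTX in a block and forwards it in a certified CrossLink (block timestamp, OTX list, shard id, block height) to the beacon chain; the beacon chain, once it has received a consecutive-height CrossLink from every shard, selects all CrossLinks with timestamp at most the minimum over shards of the last received timestamp and orders their OTXs by block timestamp then in-block index (agreed by BFT consensus); contract shards execute called contracts in this order and return commit/abort results; the sender shard coordinates the final commit or abort and notifies related shards. *)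

theory Defs
  imports Main
begin

text \<open>Abstract trace model of a sharded blockchain running Haechi.
  Shards are numbered 0..m (shard 0 is the beacon shard); time is discrete (nat).\<close>

datatype txkind = IntraTx | CrossTx | OTX

datatype 'tx msg =
    TxMsg 'tx
  | CrossLinkMsg nat nat      \<comment> \<open>certified CrossLink of shard i, block height h\<close>
  | OrderedMsg 'tx            \<comment> \<open>OTX ordered by the beacon chain, delivered to a contract shard\<close>
  | ResultMsg 'tx nat         \<comment> \<open>commit/abort execution result of contract shard j for an OTX\<close>
  | DecisionMsg 'tx           \<comment> \<open>final commit/abort decision, coordinated by the sender shard\<close>

record ('n, 'tx) exec =
  shard_of :: "'n \<Rightarrow> nat"
  byz      :: "'n set"
  recv     :: "'n \<Rightarrow> 'tx msg \<Rightarrow> nat \<Rightarrow> bool"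
  hnd      :: "nat \<Rightarrow> 'tx msg \<Rightarrow> nat \<Rightarrow> bool"  \<comment> \<open>shard i handled (committed) input at time t\<close>
  sendm    :: "nat \<Rightarrow> nat \<Rightarrow> 'tx msg \<Rightarrow> nat \<Rightarrow> bool" \<comment> \<open>shard i sends message to shard j at t\<close>
  kind     :: "'tx \<Rightarrow> txkind"
  home     :: "'tx \<Rightarrow> nat"                    \<comment> \<open>sender shard of a transaction\<close>
  others   :: "'tx \<Rightarrow> nat set"                \<comment> \<open>other involved shards (cross-shard participants / contract shards)\<close>
  btxs     :: "nat \<Rightarrow> nat \<Rightarrow> 'tx list"          \<comment> \<open>transactions (OTX list) of block h of shard i\<close>
  bts      :: "nat \<Rightarrow> nat \<Rightarrow> nat"              \<comment> \<open>timestamp of block h of shard i\<close>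
  ctime    :: "nat \<Rightarrow> nat \<Rightarrow> nat"              \<comment> \<open>time at which block h of shard i is committed\<close>
  resp     :: "'tx \<Rightarrow> nat \<Rightarrow> bool"

definition shard_nodes :: "('n,'tx) exec \<Rightarrow> nat \<Rightarrow> 'n set" where
  "shard_nodes E i = {n. shard_of E n = i}"

definition nbyz :: "('n,'tx) exec \<Rightarrow> nat \<Rightarrow> nat" where
  "nbyz E i = card (byz E \<inter> shard_nodes E i)"

definition honest :: "('n,'tx) exec \<Rightarrow> 'n \<Rightarrow> bool" where
  "honest E n \<longleftrightarrow> n \<notin> byz E"

definition honest_recv :: "('n,'tx) exec \<Rightarrow> nat \<Rightarrow> 'tx msg \<Rightarrow> nat \<Rightarrow> bool" where
  "honest_recv E i x t \<longleftrightarrow> (\<exists>n. honest E n \<and> shard_of E n = i \<and> recv E n x t)"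

definition relevant :: "('n,'tx) exec \<Rightarrow> 'tx \<Rightarrow> nat set" where
  "relevant E tx = insert (home E tx) (others E tx)"

definition handled_by :: "('n,'tx) exec \<Rightarrow> nat \<Rightarrow> 'tx \<Rightarrow> nat \<Rightarrow> bool" where
  "handled_by E i tx t \<longleftrightarrow>
     (if kind E tx = OTX then hnd E i (DecisionMsg tx) t else hnd E i (TxMsg tx) t)"

definition bft_bound :: "nat \<Rightarrow> ('n,'tx) exec \<Rightarrow> bool" where
  "bft_bound m E \<longleftrightarrow> (\<forall>i\<le>m. finite (shard_nodes E i) \<and> 3 * nbyz E i + 1 < card (shard_nodes E i))"

definition intra_shard_liveness :: "nat \<Rightarrow> ('n,'tx) exec \<Rightarrow> bool" where
  "intra_shard_liveness m E \<longleftrightarrow>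
     (\<forall>i\<le>m. \<forall>x t. honest_recv E i x t \<longrightarrow> (\<exists>t'\<ge>t. hnd E i x t'))"

definition reliable_delivery :: "nat \<Rightarrow> ('n,'tx) exec \<Rightarrow> bool" where
  "reliable_delivery m E \<longleftrightarrow>
     (\<forall>i\<le>m. \<forall>j\<le>m. \<forall>x t. sendm E i j x t \<longrightarrow> (\<exists>t'\<ge>t. honest_recv E j x t'))"

definition well_formed_txs :: "nat \<Rightarrow> ('n,'tx) exec \<Rightarrow> bool" where
  "well_formed_txs m E \<longleftrightarrow>
     (\<forall>tx. home E tx \<le> m \<and> finite (others E tx) \<and> (\<forall>j\<in>others E tx. j \<le> m)
           \<and> (kind E tx = IntraTx \<longrightarrow> others E tx = {}))"

text \<open>Non-OTX transactions: intra-shard transactions are answered by the shard's consensus;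
  the two-phase cross-shard protocol is assumed to provide responses.\<close>
definition non_otx_protocols :: "('n,'tx) exec \<Rightarrow> bool" where
  "non_otx_protocols E \<longleftrightarrow>
     (\<forall>tx t. kind E tx = IntraTx \<longrightarrow> hnd E (home E tx) (TxMsg tx) t \<longrightarrow> resp E tx t)
   \<and> (\<forall>tx t. kind E tx = CrossTx \<longrightarrow> hnd E (home E tx) (TxMsg tx) t \<longrightarrow>
        (\<exists>t'\<ge>t. resp E tx t' \<and> (\<forall>j\<in>others E tx. \<exists>t''\<ge>t. hnd E j (TxMsg tx) t'')))"

definition block_production :: "nat \<Rightarrow> ('n,'tx) exec \<Rightarrow> bool" where
  "block_production m E \<longleftrightarrow>
     (\<forall>i\<le>m. strict_mono (bts E i) \<and> (\<forall>h. sendm E i 0 (CrossLinkMsg i h) (ctime E i h)))"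

definition haechi_otx :: "nat \<Rightarrow> ('n,'tx) exec \<Rightarrow> bool" where
  "haechi_otx m E \<longleftrightarrow>
     \<comment> \<open>the sender shard processes an OTX in one of its blocks\<close>
     (\<forall>tx t. kind E tx = OTX \<longrightarrow> hnd E (home E tx) (TxMsg tx) t \<longrightarrow>
        (\<exists>h. tx \<in> set (btxs E (home E tx) h)))
   \<comment> \<open>beacon ordering: once the beacon has received, for every shard j, the consecutive CrossLinks
       of heights 0..hs j, every OTX in a received CrossLink whose timestamp is at most the minimum
       of the last received timestamps is ordered and sent to its contract shards\<close>
   \<and> (\<forall>hs t i h tx.
        (\<forall>j\<le>m. \<forall>h'\<le>hs j. \<exists>t'\<le>t. hnd E 0 (CrossLinkMsg j h') t') \<longrightarrow>
        i \<le> m \<longrightarrow> h \<le> hs i \<longrightarrow> (\<forall>j\<le>m. bts E i h \<le> bts E j (hs j)) \<longrightarrow>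
        tx \<in> set (btxs E i h) \<longrightarrow> kind E tx = OTX \<longrightarrow>
        (\<exists>t'\<ge>t. \<forall>j\<in>others E tx. sendm E 0 j (OrderedMsg tx) t'))
   \<comment> \<open>contract shards execute the called contracts and return commit/abort results\<close>
   \<and> (\<forall>tx j t. kind E tx = OTX \<longrightarrow> j \<in> others E tx \<longrightarrow> hnd E j (OrderedMsg tx) t \<longrightarrow>
        (\<exists>t'\<ge>t. sendm E j (home E tx) (ResultMsg tx j) t'))
   \<comment> \<open>the sender shard coordinates the final commit/abort and notifies the related shards\<close>
   \<and> (\<forall>tx t. kind E tx = OTX \<longrightarrow>
        (\<forall>j\<in>others E tx. \<exists>t'\<le>t. hnd E (home E tx) (ResultMsg tx j) t') \<longrightarrow>
        (\<exists>t'\<ge>t. \<forall>j\<in>relevant E tx. sendm E (home E tx) j (DecisionMsg tx) t'))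
   \<comment> \<open>the final decision of the sender shard is the response to the OTX\<close>
   \<and> (\<forall>tx t. kind E tx = OTX \<longrightarrow> hnd E (home E tx) (DecisionMsg tx) t \<longrightarrow> resp E tx t)"

definition haechi_system :: "nat \<Rightarrow> ('n,'tx) exec \<Rightarrow> bool" where
  "haechi_system m E \<longleftrightarrow> bft_bound m E \<and> intra_shard_liveness m E \<and> reliable_delivery m E
     \<and> well_formed_txs m E \<and> non_otx_protocols E \<and> block_production m E \<and> haechi_otx m E"

end

theory Submission imports Defs begin
lemma fin_bound:
  assumes "finite S" "\<forall>x\<in>S. \<exists>t'. P x t'"
  shows "\<exists>T\<ge>(t0::nat). \<forall>x\<in>S. \<exists>t'\<le>T. P x t'"
  using assms
proof (induction S rule: finite_induct)
  case empty then show ?case by auto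
next
  case (insert a F)
  then obtain T where T: "T \<ge> t0" "\<forall>x\<in>F. \<exists>t'\<le>T. P x t'" by auto
  from insert obtain ta where ta: "P a ta" by auto
  have "\<forall>x\<in>insert a F. \<exists>t'\<le>max T ta. P x t'"
  proof
    fix x assume "x \<in> insert a F"
    then show "\<exists>t'\<le>max T ta. P x t'"
    proof
      assume "x = a" then show ?thesis using ta by (intro exI[of _ ta]) simp
    next
      assume "x \<in> F" then obtain t' where "t' \<le> T" "P x t'" using T by blast
      then show ?thesis by (intro exI[of _ t']) simp
    qed
  qed
  then show ?case using T(1) by (intro exI[of _ "max T ta"]) simp
qed

lemma deliver:
  assumes "haechi_system m E" "i \<le> m" "j \<le> m" "sendm E i j x t"
  shows "\<exists>t'\<ge>t. hnd E j x t'"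
proof -
  have rd: "reliable_delivery m E" and lv: "intra_shard_liveness m E"
    using assms(1) unfolding haechi_system_def by simp_all
  obtain t1 where t1: "t1 \<ge> t" "honest_recv E j x t1"
    using rd assms(2-4) unfolding reliable_delivery_def by blast
  obtain t2 where "t2 \<ge> t1" "hnd E j x t2"
    using lv assms(3) t1(2) unfolding intra_shard_liveness_def by blast
  then show ?thesis using t1(1) by (intro exI[of _ t2]) simp
qed

lemma mono_ge: "strict_mono (f::nat\<Rightarrow>nat) \<Longrightarrow> k \<le> f k"
  by (simp add: strict_mono_imp_increasing)
theorem theorem3:
  fixes m :: nat and E :: "('n, 'tx) exec" and n :: 'n and tx :: 'tx and t :: nat
  assumes "haechi_system m E"
    and "honest E n" and "shard_of E n = home E tx" and "recv E n (TxMsg tx) t"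
  shows "(\<forall>i\<in>relevant E tx. \<exists>t'\<ge>t. handled_by E i tx t') \<and> (\<exists>t'\<ge>t. resp E tx t')"
proof -
  note sys = assms(1)
  have wf: "well_formed_txs m E" and live: "intra_shard_liveness m E"
    and nonotx: "non_otx_protocols E" and bp: "block_production m E" and hae: "haechi_otx m E"
    using sys unfolding haechi_system_def by simp_all
  define h0 where "h0 = home E tx"
  have h0m: "h0 \<le> m" using wf unfolding well_formed_txs_def h0_def by simp
  have othm: "\<forall>j\<in>others E tx. j \<le> m" and finO: "finite (others E tx)"
    using wf unfolding well_formed_txs_def by simp_all
  have "honest_recv E h0 (TxMsg tx) t" using assms(2-4) unfolding honest_recv_def h0_def by blast
  then obtain t1 where t1: "t1 \<ge> t" "hnd E h0 (TxMsg tx) t1"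
    using live h0m unfolding intra_shard_liveness_def by blast
  show ?thesis
  proof (cases "kind E tx")
    case IntraTx
    then have "others E tx = {}" using wf unfolding well_formed_txs_def by simp
    moreover have "resp E tx t1" using nonotx IntraTx t1(2) unfolding non_otx_protocols_def h0_def by simp
    ultimately show ?thesis using t1 IntraTx unfolding relevant_def handled_by_def h0_def by auto
  next
    case CrossTx
    then obtain t' where t': "t' \<ge> t1" "resp E tx t'" and oth: "\<forall>j\<in>others E tx. \<exists>t''\<ge>t1. hnd E j (TxMsg tx) t''"
      using nonotx t1(2) unfolding non_otx_protocols_def h0_def by blast
    have "\<forall>i\<in>relevant E tx. \<exists>t'\<ge>t. handled_by E i tx t'"
    proof
      fix i assume "i \<in> relevant E tx"
      then have "i = h0 \<or> i \<in> others E tx" unfolding relevant_def h0_def by simp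
      then obtain s where "s \<ge> t1" "hnd E i (TxMsg tx) s" using oth t1 by blast
      then show "\<exists>t'\<ge>t. handled_by E i tx t'" using t1(1) CrossTx unfolding handled_by_def
        by (intro exI[of _ s]) simp
    qed
    then show ?thesis using t' t1(1) by (meson le_trans)
  next
    case OTX
    have hae1: "\<forall>tx t. kind E tx = OTX \<longrightarrow> hnd E (home E tx) (TxMsg tx) t \<longrightarrow>
        (\<exists>h. tx \<in> set (btxs E (home E tx) h))"
     and hae2: "\<forall>hs t i h tx.
        (\<forall>j\<le>m. \<forall>h'\<le>hs j. \<exists>t'\<le>t. hnd E 0 (CrossLinkMsg j h') t') \<longrightarrow>
        i \<le> m \<longrightarrow> h \<le> hs i \<longrightarrow> (\<forall>j\<le>m. bts E i h \<le> bts E j (hs j)) \<longrightarrow>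
        tx \<in> set (btxs E i h) \<longrightarrow> kind E tx = OTX \<longrightarrow>
        (\<exists>t'\<ge>t. \<forall>j\<in>others E tx. sendm E 0 j (OrderedMsg tx) t')"
     and hae3: "\<forall>tx j t. kind E tx = OTX \<longrightarrow> j \<in> others E tx \<longrightarrow> hnd E j (OrderedMsg tx) t \<longrightarrow>
        (\<exists>t'\<ge>t. sendm E j (home E tx) (ResultMsg tx j) t')"
     and hae4: "\<forall>tx t. kind E tx = OTX \<longrightarrow>
        (\<forall>j\<in>others E tx. \<exists>t'\<le>t. hnd E (home E tx) (ResultMsg tx j) t') \<longrightarrow>
        (\<exists>t'\<ge>t. \<forall>j\<in>relevant E tx. sendm E (home E tx) j (DecisionMsg tx) t')"
     and hae5: "\<forall>tx t. kind E tx = OTX \<longrightarrow> hnd E (home E tx) (DecisionMsg tx) t \<longrightarrow> resp E tx t"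
      using hae unfolding haechi_otx_def by simp_all
    obtain h where h: "tx \<in> set (btxs E h0 h)" using hae1 OTX t1(2) unfolding h0_def by blast
    define H where "H = max h (bts E h0 h)"
    have "\<forall>p\<in>{..m} \<times> {..H}. \<exists>t'. hnd E 0 (CrossLinkMsg (fst p) (snd p)) t'"
    proof
      fix p assume p: "p \<in> {..m} \<times> {..H}"
      have "sendm E (fst p) 0 (CrossLinkMsg (fst p) (snd p)) (ctime E (fst p) (snd p))"
        using bp p unfolding block_production_def by auto
      moreover have "fst p \<le> m" using p by auto
      ultimately obtain s where "hnd E 0 (CrossLinkMsg (fst p) (snd p)) s"
        using deliver[OF sys, of "fst p" 0] by blast
      then show "\<exists>t'. hnd E 0 (CrossLinkMsg (fst p) (snd p)) t'" by blast
    qed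
    moreover have "finite ({..m} \<times> {..H})" by simp
    ultimately have "\<exists>T\<ge>t. \<forall>p\<in>{..m} \<times> {..H}. \<exists>t'\<le>T. hnd E 0 (CrossLinkMsg (fst p) (snd p)) t'"
      by (intro fin_bound)
    then obtain T where T: "T \<ge> t" "\<forall>p\<in>{..m} \<times> {..H}. \<exists>t'\<le>T. hnd E 0 (CrossLinkMsg (fst p) (snd p)) t'"
      by (elim exE conjE)
    have A: "\<forall>j\<le>m. \<forall>h'\<le>(\<lambda>_. H) j. \<exists>t'\<le>T. hnd E 0 (CrossLinkMsg j h') t'"
    proof (intro allI impI)
      fix j h' assume "j \<le> m" "h' \<le> (\<lambda>_. H) j"
      then have "(j, h') \<in> {..m} \<times> {..H}" by simp
      then show "\<exists>t'\<le>T. hnd E 0 (CrossLinkMsg j h') t'" using T(2) by fastforce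
    qed
    have B: "\<forall>j\<le>m. bts E h0 h \<le> bts E j ((\<lambda>_. H) j)"
    proof (intro allI impI)
      fix j assume "j \<le> m"
      then have "strict_mono (bts E j)" using bp unfolding block_production_def by simp
      then have "H \<le> bts E j H" by (rule mono_ge)
      then show "bts E h0 h \<le> bts E j ((\<lambda>_. H) j)" unfolding H_def by simp
    qed
    have hH: "h \<le> (\<lambda>_. H) h0" unfolding H_def by simp
    obtain t2 where t2: "t2 \<ge> T" "\<forall>j\<in>others E tx. sendm E 0 j (OrderedMsg tx) t2"
      using hae2[rule_format, of "\<lambda>_. H" T h0 h tx, OF A[rule_format] h0m hH B[rule_format] h OTX] by blast
    have "\<forall>j\<in>others E tx. \<exists>t'. hnd E h0 (ResultMsg tx j) t'"
    proof
      fix j assume j: "j \<in> others E tx"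
      have jm: "j \<le> m" using othm j by simp
      obtain t3 where "t3 \<ge> t2" "hnd E j (OrderedMsg tx) t3"
        using deliver[OF sys _ jm t2(2)[rule_format, OF j]] by blast
      then obtain t4 where "sendm E j h0 (ResultMsg tx j) t4"
        using hae3 OTX j unfolding h0_def by blast
      then show "\<exists>t'. hnd E h0 (ResultMsg tx j) t'"
        using deliver[OF sys jm h0m] by blast
    qed
    from fin_bound[OF finO this, of t]
    obtain T2 where T2: "T2 \<ge> t" "\<forall>j\<in>others E tx. \<exists>t'\<le>T2. hnd E h0 (ResultMsg tx j) t'"
      by blast
    obtain t5 where t5: "t5 \<ge> T2" "\<forall>j\<in>relevant E tx. sendm E h0 j (DecisionMsg tx) t5"
      using hae4 OTX T2(2) unfolding h0_def by blast
    have rel: "\<forall>i\<in>relevant E tx. \<exists>t'\<ge>t. hnd E i (DecisionMsg tx) t'"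
    proof
      fix i assume i: "i \<in> relevant E tx"
      then have "i = h0 \<or> i \<in> others E tx" unfolding relevant_def h0_def by simp
      then have im: "i \<le> m" using othm h0m by blast
      obtain s where "s \<ge> t5" "hnd E i (DecisionMsg tx) s"
        using deliver[OF sys h0m im t5(2)[rule_format, OF i]] by blast
      then show "\<exists>t'\<ge>t. hnd E i (DecisionMsg tx) t'" using t5(1) T2(1)
        by (intro exI[of _ s]) simp
    qed
    have "h0 \<in> relevant E tx" unfolding relevant_def h0_def by simp
    then obtain t6 where t6: "t6 \<ge> t" "hnd E h0 (DecisionMsg tx) t6" using rel by blast
    then have "resp E tx t6" using hae5 OTX unfolding h0_def by blast
    moreover have "\<forall>i\<in>relevant E tx. \<exists>t'\<ge>t. handled_by E i tx t'"
      using rel OTX unfolding handled_by_def by simp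
    ultimately show ?thesis using t6(1) by blast
  qed
qed

end
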